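(* Let $q$ be a prime power, and let $d$ and $k$ be positive divisors of $q-1$ such that $d\nmid k$. Then there are at most $d$ elements $a\in\mathbb F_q^*$ for which the polynomial $x^{k+1}+ax$ maps all elements of $\mu_d$ into the same coset of $\mathbb F_q^*$ modulo $\mu_d$.
   Context: $\mathbb F_q$ is the field with $q$ elements, $\mathbb F_q^*$ its multiplicative group. For a divisor $d$ of $q-1$, $\mu_d$ denotes the group of $d$-th roots of unity in $\mathbb F_q^*$. *)

theory Defs
  imports Main
begin

definition mu :: "nat \<Rightarrow> 'a::field set" where
  "mu d = {x. x ^ d = 1}"

definition mu_coset :: "nat \<Rightarrow> 'a::field \<Rightarrow> 'a set" where
  "mu_coset d c = (\<lambda>u. c * u) ` mu d"

definition maps_mu_into_one_coset :: "nat \<Rightarrow> ('a::field \<Rightarrow> 'a) \<Rightarrow> bool" where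
  "maps_mu_into_one_coset d f = (\<exists>c. c \<noteq> 0 \<and> (\<forall>z \<in> mu d. f z \<in> mu_coset d c))"

end

theory Submission imports Defs "HOL-Algebra.Multiplicative_Group" begin

definition tring :: "'a::field ring" where
  "tring = \<lparr> carrier = UNIV, monoid.mult = (\<lambda>x y. x * y), one = 1, ring.zero = 0, add = (\<lambda> x y. x + y) \<rparr>"

lemma tring_field: "field (tring :: 'a::field ring)"
proof -
  have "\<exists>y. x + y = 0" for x :: 'a
    using add.right_inverse by blast
  moreover have "x \<noteq> 0 \<Longrightarrow> \<exists>y. x * y = 1" for x :: 'a
    by (rule exI[of _ "inverse x"]) auto
  ultimately show ?thesis
    unfolding tring_def using add.right_inverse
    by unfold_locales (auto simp:algebra_simps Units_def)
qed

lemma pow_rta: "x [^]\<^bsub>(tring :: 'a::field ring)\<^esub> (n::nat) = x ^ n"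
  by (induction n) (simp_all add: tring_def)

lemma gen_exists: "\<exists>g::'a::{finite,field}. (\<forall>n. g^n = 1 \<longleftrightarrow> (card (UNIV::'a set) - 1) dvd n) \<and> (\<forall>x. x \<noteq> 0 \<longrightarrow> (\<exists>i. x = g^i))"
proof -
  let ?R = "tring :: 'a ring"
  interpret F: field ?R by (rule tring_field)
  have fin: "finite (carrier ?R)" by (simp add: tring_def)
  obtain g where g: "g \<in> carrier (mult_of ?R)" and gen: "carrier (mult_of ?R) = {g[^]\<^bsub>?R\<^esub>i | i::nat . i \<in> UNIV}"
    using F.finite_field_mult_group_has_gen[OF fin] by blast
  interpret G: group "mult_of ?R" by (rule F.field_mult_group)
  have car: "carrier (mult_of ?R) = UNIV - {0}" by (simp add: tring_def)
  have "generate (mult_of ?R) {g} = carrier (mult_of ?R)"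
  proof
    show "generate (mult_of ?R) {g} \<subseteq> carrier (mult_of ?R)" using g G.generate_incl by blast
    show "carrier (mult_of ?R) \<subseteq> generate (mult_of ?R) {g}"
    proof
      fix x assume "x \<in> carrier (mult_of ?R)"
      then obtain i :: nat where "x = g[^]\<^bsub>?R\<^esub>i" using gen by blast
      hence "x = g[^]\<^bsub>mult_of ?R\<^esub>i" by (simp add: nat_pow_mult_of)
      thus "x \<in> generate (mult_of ?R) {g}" using G.generate_pow_on_finite_carrier[OF _ g] fin by (auto simp: tring_def)
    qed
  qed
  hence "G.ord g = card (carrier (mult_of ?R))" using G.generate_pow_card[OF g] by simp
  also have "\<dots> = card (UNIV::'a set) - 1" using car by (simp add: card_Diff_singleton)
  finally have o: "G.ord g = card (UNIV::'a set) - 1" .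
  have "g^n = 1 \<longleftrightarrow> (card (UNIV::'a set) - 1) dvd n" for n
    using G.pow_eq_id[OF g, of n] o by (simp add: nat_pow_mult_of pow_rta) (simp add: tring_def)
  moreover have "\<forall>x. x \<noteq> 0 \<longrightarrow> (\<exists>i. x = g^i)"
  proof (intro allI impI)
    fix x :: 'a assume "x \<noteq> 0"
    hence "x \<in> carrier (mult_of ?R)" using car by simp
    then obtain i :: nat where "x = g[^]\<^bsub>?R\<^esub>i" using gen by blast
    thus "\<exists>i. x = g^i" by (auto simp: pow_rta)
  qed
  ultimately show ?thesis by blast
qed


theorem proposition4p6:
  fixes d k :: nat
  assumes "d > 0" and "k > 0"
    and "d dvd (card (UNIV :: 'a set) - 1)" and "k dvd (card (UNIV :: 'a set) - 1)"
    and "\<not> d dvd k"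
  shows "card {a :: 'a::{finite,field}. a \<noteq> 0 \<and> maps_mu_into_one_coset d (\<lambda>x. x ^ (k + 1) + a * x)} \<le> d"
proof -
  define Q where "Q = card (UNIV :: 'a set) - 1"
  obtain g :: 'a where gord: "\<And>n. g^n = 1 \<longleftrightarrow> Q dvd n" and ggen: "\<And>x. x \<noteq> 0 \<Longrightarrow> \<exists>i. x = g^i"
    using gen_exists unfolding Q_def by blast
  have "card {0::'a, 1} \<le> card (UNIV :: 'a set)" by (rule card_mono) auto
  hence "card (UNIV :: 'a set) \<ge> 2" by simp
  hence Qpos: "Q > 0" unfolding Q_def by simp
  obtain e where e: "Q = d * e" using assms(3) unfolding Q_def by blast
  have epos: "e > 0" using Qpos e by (cases e) auto
  define z where "z = g ^ e"
  have zd: "z ^ d = 1" unfolding z_def by (simp add: gord e power_mult[symmetric] mult.commute)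
  have zk: "z ^ k \<noteq> 1"
  proof
    assume "z ^ k = 1"
    hence "Q dvd e * k" unfolding z_def by (simp add: gord power_mult[symmetric])
    then obtain m where "e * k = d * e * m" using e by auto
    hence "k = d * m" using epos by (simp add: mult.assoc mult.left_commute)
    thus False using assms(5) by simp
  qed
  define \<zeta> where "\<zeta> = z ^ k"
  have zeta_d: "\<zeta> ^ d = 1" unfolding \<zeta>_def using zd by (metis power_mult mult.commute power_one)
  have zeta1: "\<zeta> \<noteq> 1" unfolding \<zeta>_def using zk .
  have mu_bound: "card (mu d :: 'a set) \<le> d"
  proof -
    have "mu d \<subseteq> (\<lambda>i. z ^ i) ` {..<d}"
    proof
      fix x :: 'a assume "x \<in> mu d"
      hence xd: "x ^ d = 1" by (simp add: mu_def)
      hence "x \<noteq> 0" using assms(1) by (metis power_0_left zero_neq_one neq0_conv)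
      then obtain j where j: "x = g ^ j" using ggen by blast
      hence "Q dvd j * d" using xd by (simp add: gord power_mult[symmetric])
      hence "e dvd j" using e assms(1) by (simp add: mult.commute)
      then obtain j' where j': "j = e * j'" by blast
      have "x = z ^ j'" unfolding z_def j j' by (simp add: power_mult)
      also have "\<dots> = z ^ (j' mod d)"
        by (metis (no_types) div_mult_mod_eq power_add power_mult zd power_one mult_1 mult.commute)
      finally show "x \<in> (\<lambda>i. z ^ i) ` {..<d}" using assms(1) by auto
    qed
    hence "card (mu d :: 'a set) \<le> card ((\<lambda>i. z ^ i) ` {..<d})" by (rule card_mono[rotated]) simp
    also have "\<dots> \<le> d" using card_image_le[of "{..<d}" "\<lambda>i. z ^ i"] by simp
    finally show ?thesis .
  qed
  let ?S = "{a :: 'a. a \<noteq> 0 \<and> maps_mu_into_one_coset d (\<lambda>x. x ^ (k + 1) + a * x)}"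
  define \<phi> where "\<phi> a = (a + \<zeta>) / (a + 1)" for a :: 'a
  have key: "a + 1 \<noteq> 0 \<and> \<phi> a \<in> mu d" if "a \<in> ?S" for a
  proof -
    from that obtain c where c0: "c \<noteq> 0" and cz: "\<forall>w \<in> mu d. w ^ (k + 1) + a * w \<in> mu_coset d c"
      unfolding maps_mu_into_one_coset_def by blast
    have "(1::'a) \<in> mu d" by (simp add: mu_def)
    hence "(1::'a) ^ (k + 1) + a * 1 \<in> mu_coset d c" by (rule bspec[OF cz])
    then obtain u1 where "u1 \<in> mu d" "(1::'a) ^ (k + 1) + a * 1 = c * u1"
      unfolding mu_coset_def by blast 
    hence u1: "u1 ^ d = 1" "1 + a = c * u1" by (simp_all add: mu_def)
    have "z \<in> mu d" using zd by (simp add: mu_def)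
    hence "z ^ (k + 1) + a * z \<in> mu_coset d c" by (rule bspec[OF cz])
    then obtain u2 where "u2 \<in> mu d" "z ^ (k + 1) + a * z = c * u2"
      unfolding mu_coset_def by blast
    hence u2: "u2 ^ d = 1" "z ^ (k + 1) + a * z = c * u2" by (simp_all add: mu_def)
    have "u1 \<noteq> 0" using u1(1) assms(1) by (metis power_0_left zero_neq_one neq0_conv)
    hence a1: "a + 1 \<noteq> 0" using u1(2) c0 by (simp add: add.commute)
    have e1: "(a + 1) ^ d = c ^ d" using u1 by (simp add: add.commute power_mult_distrib)
    have "z ^ (k + 1) + a * z = z * (\<zeta> + a)" unfolding \<zeta>_def by (simp add: algebra_simps)
    hence "(z * (\<zeta> + a)) ^ d = c ^ d" using u2 by (simp add: power_mult_distrib)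
    hence e2: "(a + \<zeta>) ^ d = c ^ d" using zd by (simp add: power_mult_distrib add.commute)
    have "\<phi> a ^ d = 1" unfolding \<phi>_def using e1 e2 a1 c0 by (simp add: power_divide)
    thus ?thesis using a1 by (simp add: mu_def)
  qed
  have inj: "inj_on \<phi> ?S"
  proof (rule inj_onI)
    fix a b assume a: "a \<in> ?S" and b: "b \<in> ?S" and eq: "\<phi> a = \<phi> b"
    have a1: "a + 1 \<noteq> 0" and b1: "b + 1 \<noteq> 0" using key a b by auto
    from eq have "(a + \<zeta>) * (b + 1) = (b + \<zeta>) * (a + 1)" unfolding \<phi>_def using a1 b1
      by (simp add: frac_eq_eq)
    hence "(a - b) * (1 - \<zeta>) = 0" by (simp add: algebra_simps)
    thus "a = b" using zeta1 by simp
  qed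
  have "card ?S \<le> card (mu d :: 'a set)"
  proof (rule card_inj_on_le[OF inj])
    show "\<phi> ` ?S \<subseteq> mu d" using key by auto
  qed simp
  thus ?thesis using mu_bound by linarith
qed

end
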